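(* The graphs $\mathbf{X}_6$ and $\mathbf{X}_7$ are of finite mutation type, i.e. each of them is mutation-equivalent to only finitely many graphs up to isomorphism.
   Context: A graph here is a finite directed multigraph with no loops and no oriented $2$-cycles (never arrows both from $i$ to $j$ and from $j$ to $i$); multiple arrows in the same direction are allowed. Such graphs correspond to skew-symmetric integer matrices $B=(b_{ij})$, with $b_{ij}>0$ meaning $b_{ij}$ arrows from $j$ to $i$. The mutation $\mu_k\Gamma$ of $\Gamma$ at a vertex $k$ is obtained as follows: for every pair of arrows $i\to k$ and $k\to j$ add a new arrow $i\to j$; then reverse every arrow starting or ending at $k$; then repeatedly delete pairs of opposite arrows $i\to j$, $j\to i$ until no oriented $2$-cycles remain. (Equivalently, $b'_{ij}=-b_{ij}$ if $i=k$ or $j=k$, and $b'_{ij}=b_{ij}+[b_{ik}]_+[b_{kj}]_+-[-b_{ik}]_+[-b_{kj}]_+$ otherwise.) Two graphs are mutation-equivalent if one is obtained from the other by a sequence of mutations and a relabeling of vertices. The mutation class of $\Gamma$ is the set of isomorphism classes of graphs mutation-equivalent to $\Gamma$; $\Gamma$ is of finite mutation type (mutation-finite) if its mutation class is finite. $\mathbf{X}_6$ is the graph with vertices $x,w,y_1,z_1,y_2,z_2$ and arrows: two arrows $y_1\to z_1$, one arrow $z_1\to x$, one arrow $x\to y_1$; two arrows $y_2\to z_2$, one arrow $z_2\to x$, one arrow $x\to y_2$; and one arrow $w\to x$. $\mathbf{X}_7$ is the graph with vertices $x,y_1,z_1,y_2,z_2,y_3,z_3$ and, for each $i=1,2,3$,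 two arrows $y_i\to z_i$, one arrow $z_i\to x$ and one arrow $x\to y_i$ (and no other arrows). *)

theory Defs
  imports Main
begin

text \<open>A graph on the vertex set {0..<n} is encoded by its skew-symmetric exchange matrix
  B :: nat \<Rightarrow> nat \<Rightarrow> int, where B i j > 0 means B i j arrows from j to i.
  Entries with an index outside {0..<n} are 0.\<close>

type_synonym qmat = "nat \<Rightarrow> nat \<Rightarrow> int"

text \<open>Matrix of a graph given by arrow counts A i j = number of arrows i \<rightarrow> j.\<close>
definition mat_of_arrows :: "nat \<Rightarrow> (nat \<Rightarrow> nat \<Rightarrow> nat) \<Rightarrow> qmat" where
  "mat_of_arrows n A = (\<lambda>i j. if i < n \<and> j < n then int (A j i) - int (A i j) else 0)"

definition pos :: "int \<Rightarrow> int" where "pos x = max x 0"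

definition mutate :: "nat \<Rightarrow> nat \<Rightarrow> qmat \<Rightarrow> qmat" where
  "mutate n k B = (\<lambda>i j. if i < n \<and> j < n then
       (if i = k \<or> j = k then - B i j
        else B i j + pos (B i k) * pos (B k j) - pos (- B i k) * pos (- B k j))
     else 0)"

inductive mut_reach :: "nat \<Rightarrow> qmat \<Rightarrow> qmat \<Rightarrow> bool" for n where
  refl: "mut_reach n B B"
| step: "mut_reach n B C \<Longrightarrow> k < n \<Longrightarrow> mut_reach n B (mutate n k C)"

definition iso :: "nat \<Rightarrow> qmat \<Rightarrow> qmat \<Rightarrow> bool" where
  "iso n B C \<longleftrightarrow> (\<exists>\<sigma>. bij_betw \<sigma> {0..<n} {0..<n} \<and>
      (\<forall>i j. C i j = (if i < n \<and> j < n then B (\<sigma> i) (\<sigma> j) else 0)))"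

definition mutation_equivalent :: "nat \<Rightarrow> qmat \<Rightarrow> qmat \<Rightarrow> bool" where
  "mutation_equivalent n B C \<longleftrightarrow> (\<exists>D. mut_reach n B D \<and> iso n D C)"

definition mutation_class :: "nat \<Rightarrow> qmat \<Rightarrow> qmat set set" where
  "mutation_class n B = (\<lambda>C. {D. iso n C D}) ` {C. mutation_equivalent n B C}"

definition mutation_finite :: "nat \<Rightarrow> qmat \<Rightarrow> bool" where
  "mutation_finite n B \<longleftrightarrow> finite (mutation_class n B)"

text \<open>X6: vertices x=0, w=1, y1=2, z1=3, y2=4, z2=5.\<close>
definition X6_arrows :: "nat \<Rightarrow> nat \<Rightarrow> nat" where
  "X6_arrows i j =
     (if (i, j) = (2, 3) then 2 else if (i, j) = (3, 0) then 1 else if (i, j) = (0, 2) then 1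
      else if (i, j) = (4, 5) then 2 else if (i, j) = (5, 0) then 1 else if (i, j) = (0, 4) then 1
      else if (i, j) = (1, 0) then 1 else 0)"

definition X6 :: qmat where "X6 = mat_of_arrows 6 X6_arrows"

text \<open>X7: vertices x=0, y1=1, z1=2, y2=3, z2=4, y3=5, z3=6.\<close>
definition X7_arrows :: "nat \<Rightarrow> nat \<Rightarrow> nat" where
  "X7_arrows i j =
     (if (i, j) \<in> {(1, 2), (3, 4), (5, 6)} then 2
      else if (i, j) \<in> {(2, 0), (4, 0), (6, 0), (0, 1), (0, 3), (0, 5)} then 1
      else 0)"

definition X7 :: qmat where "X7 = mat_of_arrows 7 X7_arrows"

end

theory Submission imports Defs "HOL-Library.FuncSet" begin

definition lm :: "nat \<Rightarrow> int list list \<Rightarrow> qmat" where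
  "lm n L = (\<lambda>i j. if i < n \<and> j < n then L ! i ! j else 0)"
definition relab :: "nat \<Rightarrow> (nat \<Rightarrow> nat) \<Rightarrow> qmat \<Rightarrow> qmat" where
  "relab n s B = (\<lambda>i j. if i < n \<and> j < n then B (s i) (s j) else 0)"
definition tab :: "nat \<Rightarrow> qmat \<Rightarrow> int list list" where
  "tab n B = map (\<lambda>i. map (\<lambda>j. B i j) [0..<n]) [0..<n]"
definition zo :: "nat \<Rightarrow> qmat \<Rightarrow> bool" where
  "zo n B \<longleftrightarrow> (\<forall>i j. \<not>(i < n \<and> j < n) \<longrightarrow> B i j = 0)"

lemma zo_mutate: "zo n (mutate n k B)" by (simp add: zo_def mutate_def)
lemma zo_relab: "zo n (relab n s B)" by (simp add: zo_def relab_def)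
lemma zo_lm: "zo n (lm n L)" by (simp add: zo_def lm_def)
lemma zo_moa: "zo n (mat_of_arrows n A)" by (simp add: zo_def mat_of_arrows_def)

lemma lm_tab: "zo n B \<Longrightarrow> lm n (tab n B) = B"
  by (auto simp: zo_def lm_def tab_def fun_eq_iff)

lemma eq_by_tab: "zo n X \<Longrightarrow> zo n Y \<Longrightarrow> tab n X = tab n Y \<Longrightarrow> X = Y"
  by (metis lm_tab)

lemma mutate_relab:
  assumes b: "bij_betw s {0..<n} {0..<n}" and k: "k < n"
  shows "mutate n k (relab n s B) = relab n s (mutate n (s k) B)"
proof -
  have inj: "inj_on s {0..<n}" and im: "\<And>i. i < n \<Longrightarrow> s i < n"
    using b by (auto simp: bij_betw_def)
  have eq: "\<And>i. i < n \<Longrightarrow> (s i = s k) = (i = k)"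
    using inj k by (auto simp: inj_on_def)
  show ?thesis
    by (auto simp: fun_eq_iff mutate_def relab_def k im eq)
qed

lemma relab_comp:
  assumes "\<And>i. i < n \<Longrightarrow> r i < n"
  shows "relab n r (relab n s B) = relab n (s \<circ> r) B"
  using assms by (auto simp: fun_eq_iff relab_def)

definition Inv :: "nat \<Rightarrow> qmat set \<Rightarrow> qmat \<Rightarrow> bool" where
  "Inv n S D \<longleftrightarrow> (\<exists>R\<in>S. \<exists>s. bij_betw s {0..<n} {0..<n} \<and> D = relab n s R)"

definition closed :: "nat \<Rightarrow> qmat set \<Rightarrow> bool" where
  "closed n S \<longleftrightarrow> (\<forall>R\<in>S. \<forall>k<n. \<exists>R'\<in>S. \<exists>t. bij_betw t {0..<n} {0..<n} \<and> mutate n k R = relab n t R')"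

lemma Inv_reach:
  assumes c: "closed n S" and r: "mut_reach n B D" and i: "Inv n S B"
  shows "Inv n S D"
  using r i
proof induction
  case refl then show ?case .
next
  case (step B0 C k)
  then have "Inv n S C" by blast
  then obtain R s where R: "R \<in> S" and s: "bij_betw s {0..<n} {0..<n}" and C: "C = relab n s R"
    by (auto simp: Inv_def)
  have sk: "s k < n" using s step.hyps(2) by (auto simp: bij_betw_def)
  obtain R' t where R': "R' \<in> S" and t: "bij_betw t {0..<n} {0..<n}" and m: "mutate n (s k) R = relab n t R'"
    using c R sk unfolding closed_def by blast
  have "mutate n k C = relab n s (relab n t R')"
    using mutate_relab[OF s step.hyps(2)] C m by simp
  also have "\<dots> = relab n (t \<circ> s) R'"
    by (rule relab_comp) (use s in \<open>auto simp: bij_betw_def\<close>)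
  finally show ?case using R' bij_betw_trans[OF s t] by (auto simp: Inv_def)
qed

lemma relab_restrict: "relab n s R = relab n (restrict s {0..<n}) R"
  by (auto simp: fun_eq_iff relab_def)

lemma finite_class:
  assumes c: "closed n S" and f: "finite S" and i: "Inv n S B"
  shows "mutation_finite n B"
proof -
  have "{C. mutation_equivalent n B C} \<subseteq> (\<lambda>(R,f). relab n f R) ` (S \<times> ({0..<n} \<rightarrow>\<^sub>E {0..<n}))"
  proof
    fix C assume "C \<in> {C. mutation_equivalent n B C}"
    then obtain D where r: "mut_reach n B D" and iso: "iso n D C"
      by (auto simp: mutation_equivalent_def)
    obtain R s where R: "R \<in> S" and s: "bij_betw s {0..<n} {0..<n}" and D: "D = relab n s R"
      using Inv_reach[OF c r i] by (auto simp: Inv_def)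
    obtain r' where r': "bij_betw r' {0..<n} {0..<n}" and C: "C = relab n r' D"
      using iso by (auto simp: iso_def relab_def fun_eq_iff)
    have "C = relab n (s \<circ> r') R"
      using C D relab_comp[of n r' s R] r' by (metis atLeastLessThan_iff bij_betwE zero_le)
    also have "\<dots> = relab n (restrict (s \<circ> r') {0..<n}) R" by (rule relab_restrict)
    finally have "C = relab n (restrict (s \<circ> r') {0..<n}) R" .
    moreover have "restrict (s \<circ> r') {0..<n} \<in> {0..<n} \<rightarrow>\<^sub>E {0..<n}"
      using bij_betwE[OF s] bij_betwE[OF r'] by auto
    ultimately show "C \<in> (\<lambda>(R,f). relab n f R) ` (S \<times> ({0..<n} \<rightarrow>\<^sub>E {0..<n}))"
      using R by force
  qed
  moreover have "finite ((\<lambda>(R,f). relab n f R) ` (S \<times> ({0..<n} \<rightarrow>\<^sub>E {0..<n})))"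
    using f by (intro finite_imageI finite_cartesian_product finite_PiE) auto
  ultimately have "finite {C. mutation_equivalent n B C}" by (rule finite_subset)
  then show ?thesis by (simp add: mutation_finite_def mutation_class_def)
qed

lemma bij_list: "distinct t \<Longrightarrow> length t = n \<Longrightarrow> set t = {0..<n} \<Longrightarrow> bij_betw ((!) t) {0..<n} {0..<n}"
  by (rule bij_betw_nth) auto

definition L6_0 :: "int list list" where "L6_0 = [[(0::int),(1::int),(- 1),(1::int),(- 1),(1::int)],[(- 1),(0::int),(0::int),(0::int),(0::int),(0::int)],[(1::int),(0::int),(0::int),(- 2),(0::int),(0::int)],[(- 1),(0::int),(2::int),(0::int),(0::int),(0::int)],[(1::int),(0::int),(0::int),(0::int),(0::int),(- 2)],[(- 1),(0::int),(0::int),(0::int),(2::int),(0::int)]]"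

definition L6_1 :: "int list list" where "L6_1 = [[(0::int),(- 1),(1::int),(- 1),(1::int),(- 1)],[(1::int),(0::int),(- 1),(0::int),(- 1),(0::int)],[(- 1),(1::int),(0::int),(- 1),(0::int),(1::int)],[(1::int),(0::int),(1::int),(0::int),(- 1),(0::int)],[(- 1),(1::int),(0::int),(1::int),(0::int),(- 1)],[(1::int),(0::int),(- 1),(0::int),(1::int),(0::int)]]"

definition L6_2 :: "int list list" where "L6_2 = [[(0::int),(- 1),(- 1),(1::int),(- 1),(1::int)],[(1::int),(0::int),(0::int),(0::int),(0::int),(0::int)],[(1::int),(0::int),(0::int),(- 2),(0::int),(0::int)],[(- 1),(0::int),(2::int),(0::int),(0::int),(0::int)],[(1::int),(0::int),(0::int),(0::int),(0::int),(- 2)],[(- 1),(0::int),(0::int),(0::int),(2::int),(0::int)]]"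

definition L6_3 :: "int list list" where "L6_3 = [[(0::int),(1::int),(0::int),(- 1),(0::int),(- 1)],[(- 1),(0::int),(1::int),(0::int),(1::int),(0::int)],[(0::int),(- 1),(0::int),(- 1),(0::int),(1::int)],[(1::int),(0::int),(1::int),(0::int),(- 1),(0::int)],[(0::int),(- 1),(0::int),(1::int),(0::int),(- 1)],[(1::int),(0::int),(- 1),(0::int),(1::int),(0::int)]]"

definition L6_4 :: "int list list" where "L6_4 = [[(0::int),(0::int),(- 1),(- 1),(1::int),(0::int)],[(0::int),(0::int),(1::int),(- 1),(- 1),(0::int)],[(1::int),(- 1),(0::int),(1::int),(0::int),(- 1)],[(1::int),(1::int),(- 1),(0::int),(- 1),(1::int)],[(- 1),(1::int),(0::int),(1::int),(0::int),(- 1)],[(0::int),(0::int),(1::int),(- 1),(1::int),(0::int)]]"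

definition S6 :: "qmat set" where "S6 = {lm 6 L6_0, lm 6 L6_1, lm 6 L6_2, lm 6 L6_3, lm 6 L6_4}"

lemma X6_lm: "X6 = lm 6 L6_0"
  by (rule eq_by_tab[OF zo_moa[of 6 X6_arrows, folded X6_def] zo_lm]) (simp add: X6_def X6_arrows_def; code_simp)

lemma c6_0_0: "mutate 6 0 (lm 6 L6_0) = relab 6 ((!) [0::nat,1,2,3,4,5]) (lm 6 L6_1)"
  by (rule eq_by_tab[OF zo_mutate zo_relab]) (simp add: L6_0_def L6_1_def; code_simp)

lemma b6_0_0: "bij_betw ((!) [0::nat,1,2,3,4,5]) {0..<6} {0..<6}"
  by (rule bij_list) (simp_all add: atLeast0LessThan lessThan_nat_numeral lessThan_Suc insert_commute)

lemma c6_0_1: "mutate 6 1 (lm 6 L6_0) = relab 6 ((!) [0::nat,1,2,3,4,5]) (lm 6 L6_2)"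
  by (rule eq_by_tab[OF zo_mutate zo_relab]) (simp add: L6_0_def L6_2_def; code_simp)

lemma b6_0_1: "bij_betw ((!) [0::nat,1,2,3,4,5]) {0..<6} {0..<6}"
  by (rule bij_list) (simp_all add: atLeast0LessThan lessThan_nat_numeral lessThan_Suc insert_commute)

lemma c6_0_2: "mutate 6 2 (lm 6 L6_0) = relab 6 ((!) [0::nat,1,3,2,4,5]) (lm 6 L6_0)"
  by (rule eq_by_tab[OF zo_mutate zo_relab]) (simp add: L6_0_def L6_0_def; code_simp)

lemma b6_0_2: "bij_betw ((!) [0::nat,1,3,2,4,5]) {0..<6} {0..<6}"
  by (rule bij_list) (simp_all add: atLeast0LessThan lessThan_nat_numeral lessThan_Suc insert_commute)

lemma c6_0_3: "mutate 6 3 (lm 6 L6_0) = relab 6 ((!) [0::nat,1,3,2,4,5]) (lm 6 L6_0)"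
  by (rule eq_by_tab[OF zo_mutate zo_relab]) (simp add: L6_0_def L6_0_def; code_simp)

lemma b6_0_3: "bij_betw ((!) [0::nat,1,3,2,4,5]) {0..<6} {0..<6}"
  by (rule bij_list) (simp_all add: atLeast0LessThan lessThan_nat_numeral lessThan_Suc insert_commute)

lemma c6_0_4: "mutate 6 4 (lm 6 L6_0) = relab 6 ((!) [0::nat,1,2,3,5,4]) (lm 6 L6_0)"
  by (rule eq_by_tab[OF zo_mutate zo_relab]) (simp add: L6_0_def L6_0_def; code_simp)

lemma b6_0_4: "bij_betw ((!) [0::nat,1,2,3,5,4]) {0..<6} {0..<6}"
  by (rule bij_list) (simp_all add: atLeast0LessThan lessThan_nat_numeral lessThan_Suc insert_commute)

lemma c6_0_5: "mutate 6 5 (lm 6 L6_0) = relab 6 ((!) [0::nat,1,2,3,5,4]) (lm 6 L6_0)"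
  by (rule eq_by_tab[OF zo_mutate zo_relab]) (simp add: L6_0_def L6_0_def; code_simp)

lemma b6_0_5: "bij_betw ((!) [0::nat,1,2,3,5,4]) {0..<6} {0..<6}"
  by (rule bij_list) (simp_all add: atLeast0LessThan lessThan_nat_numeral lessThan_Suc insert_commute)

lemma cl6_0: "k < 6 \<Longrightarrow> \<exists>R'\<in>S6. \<exists>t. bij_betw t {0..<6} {0..<6} \<and> mutate 6 k (lm 6 L6_0) = relab 6 t R'"
proof -
  assume "k < 6"
  then have "k = 0 | k = 1 | k = 2 | k = 3 | k = 4 | k = 5" by linarith
  then show ?thesis
  proof (elim disjE)
    assume k: "k = 0" show ?thesis unfolding k S6_def using b6_0_0 c6_0_0 by blast
  next
    assume k: "k = 1" show ?thesis unfolding k S6_def using b6_0_1 c6_0_1 by blast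
  next
    assume k: "k = 2" show ?thesis unfolding k S6_def using b6_0_2 c6_0_2 by blast
  next
    assume k: "k = 3" show ?thesis unfolding k S6_def using b6_0_3 c6_0_3 by blast
  next
    assume k: "k = 4" show ?thesis unfolding k S6_def using b6_0_4 c6_0_4 by blast
  next
    assume k: "k = 5" show ?thesis unfolding k S6_def using b6_0_5 c6_0_5 by blast
  qed
qed

lemma c6_1_0: "mutate 6 0 (lm 6 L6_1) = relab 6 ((!) [0::nat,1,2,3,4,5]) (lm 6 L6_0)"
  by (rule eq_by_tab[OF zo_mutate zo_relab]) (simp add: L6_1_def L6_0_def; code_simp)

lemma b6_1_0: "bij_betw ((!) [0::nat,1,2,3,4,5]) {0..<6} {0..<6}"
  by (rule bij_list) (simp_all add: atLeast0LessThan lessThan_nat_numeral lessThan_Suc insert_commute)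

lemma c6_1_1: "mutate 6 1 (lm 6 L6_1) = relab 6 ((!) [0::nat,1,2,3,4,5]) (lm 6 L6_3)"
  by (rule eq_by_tab[OF zo_mutate zo_relab]) (simp add: L6_1_def L6_3_def; code_simp)

lemma b6_1_1: "bij_betw ((!) [0::nat,1,2,3,4,5]) {0..<6} {0..<6}"
  by (rule bij_list) (simp_all add: atLeast0LessThan lessThan_nat_numeral lessThan_Suc insert_commute)

lemma c6_1_2: "mutate 6 2 (lm 6 L6_1) = relab 6 ((!) [0::nat,1,2,3,4,5]) (lm 6 L6_4)"
  by (rule eq_by_tab[OF zo_mutate zo_relab]) (simp add: L6_1_def L6_4_def; code_simp)

lemma b6_1_2: "bij_betw ((!) [0::nat,1,2,3,4,5]) {0..<6} {0..<6}"
  by (rule bij_list) (simp_all add: atLeast0LessThan lessThan_nat_numeral lessThan_Suc insert_commute)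

lemma c6_1_3: "mutate 6 3 (lm 6 L6_1) = relab 6 ((!) [2::nat,1,3,0,4,5]) (lm 6 L6_4)"
  by (rule eq_by_tab[OF zo_mutate zo_relab]) (simp add: L6_1_def L6_4_def; code_simp)

lemma b6_1_3: "bij_betw ((!) [2::nat,1,3,0,4,5]) {0..<6} {0..<6}"
  by (rule bij_list) (simp_all add: atLeast0LessThan lessThan_nat_numeral lessThan_Suc insert_commute)

lemma c6_1_4: "mutate 6 4 (lm 6 L6_1) = relab 6 ((!) [0::nat,1,4,5,2,3]) (lm 6 L6_4)"
  by (rule eq_by_tab[OF zo_mutate zo_relab]) (simp add: L6_1_def L6_4_def; code_simp)

lemma b6_1_4: "bij_betw ((!) [0::nat,1,4,5,2,3]) {0..<6} {0..<6}"
  by (rule bij_list) (simp_all add: atLeast0LessThan lessThan_nat_numeral lessThan_Suc insert_commute)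

lemma c6_1_5: "mutate 6 5 (lm 6 L6_1) = relab 6 ((!) [2::nat,1,4,5,3,0]) (lm 6 L6_4)"
  by (rule eq_by_tab[OF zo_mutate zo_relab]) (simp add: L6_1_def L6_4_def; code_simp)

lemma b6_1_5: "bij_betw ((!) [2::nat,1,4,5,3,0]) {0..<6} {0..<6}"
  by (rule bij_list) (simp_all add: atLeast0LessThan lessThan_nat_numeral lessThan_Suc insert_commute)

lemma cl6_1: "k < 6 \<Longrightarrow> \<exists>R'\<in>S6. \<exists>t. bij_betw t {0..<6} {0..<6} \<and> mutate 6 k (lm 6 L6_1) = relab 6 t R'"
proof -
  assume "k < 6"
  then have "k = 0 | k = 1 | k = 2 | k = 3 | k = 4 | k = 5" by linarith
  then show ?thesis
  proof (elim disjE)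
    assume k: "k = 0" show ?thesis unfolding k S6_def using b6_1_0 c6_1_0 by blast
  next
    assume k: "k = 1" show ?thesis unfolding k S6_def using b6_1_1 c6_1_1 by blast
  next
    assume k: "k = 2" show ?thesis unfolding k S6_def using b6_1_2 c6_1_2 by blast
  next
    assume k: "k = 3" show ?thesis unfolding k S6_def using b6_1_3 c6_1_3 by blast
  next
    assume k: "k = 4" show ?thesis unfolding k S6_def using b6_1_4 c6_1_4 by blast
  next
    assume k: "k = 5" show ?thesis unfolding k S6_def using b6_1_5 c6_1_5 by blast
  qed
qed

lemma c6_2_0: "mutate 6 0 (lm 6 L6_2) = relab 6 ((!) [3::nat,5,0,2,1,4]) (lm 6 L6_4)"
  by (rule eq_by_tab[OF zo_mutate zo_relab]) (simp add: L6_2_def L6_4_def; code_simp)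

lemma b6_2_0: "bij_betw ((!) [3::nat,5,0,2,1,4]) {0..<6} {0..<6}"
  by (rule bij_list) (simp_all add: atLeast0LessThan lessThan_nat_numeral lessThan_Suc insert_commute)

lemma c6_2_1: "mutate 6 1 (lm 6 L6_2) = relab 6 ((!) [0::nat,1,2,3,4,5]) (lm 6 L6_0)"
  by (rule eq_by_tab[OF zo_mutate zo_relab]) (simp add: L6_2_def L6_0_def; code_simp)

lemma b6_2_1: "bij_betw ((!) [0::nat,1,2,3,4,5]) {0..<6} {0..<6}"
  by (rule bij_list) (simp_all add: atLeast0LessThan lessThan_nat_numeral lessThan_Suc insert_commute)

lemma c6_2_2: "mutate 6 2 (lm 6 L6_2) = relab 6 ((!) [0::nat,1,3,2,4,5]) (lm 6 L6_2)"
  by (rule eq_by_tab[OF zo_mutate zo_relab]) (simp add: L6_2_def L6_2_def; code_simp)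

lemma b6_2_2: "bij_betw ((!) [0::nat,1,3,2,4,5]) {0..<6} {0..<6}"
  by (rule bij_list) (simp_all add: atLeast0LessThan lessThan_nat_numeral lessThan_Suc insert_commute)

lemma c6_2_3: "mutate 6 3 (lm 6 L6_2) = relab 6 ((!) [0::nat,1,3,2,4,5]) (lm 6 L6_2)"
  by (rule eq_by_tab[OF zo_mutate zo_relab]) (simp add: L6_2_def L6_2_def; code_simp)

lemma b6_2_3: "bij_betw ((!) [0::nat,1,3,2,4,5]) {0..<6} {0..<6}"
  by (rule bij_list) (simp_all add: atLeast0LessThan lessThan_nat_numeral lessThan_Suc insert_commute)

lemma c6_2_4: "mutate 6 4 (lm 6 L6_2) = relab 6 ((!) [0::nat,1,2,3,5,4]) (lm 6 L6_2)"
  by (rule eq_by_tab[OF zo_mutate zo_relab]) (simp add: L6_2_def L6_2_def; code_simp)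

lemma b6_2_4: "bij_betw ((!) [0::nat,1,2,3,5,4]) {0..<6} {0..<6}"
  by (rule bij_list) (simp_all add: atLeast0LessThan lessThan_nat_numeral lessThan_Suc insert_commute)

lemma c6_2_5: "mutate 6 5 (lm 6 L6_2) = relab 6 ((!) [0::nat,1,2,3,5,4]) (lm 6 L6_2)"
  by (rule eq_by_tab[OF zo_mutate zo_relab]) (simp add: L6_2_def L6_2_def; code_simp)

lemma b6_2_5: "bij_betw ((!) [0::nat,1,2,3,5,4]) {0..<6} {0..<6}"
  by (rule bij_list) (simp_all add: atLeast0LessThan lessThan_nat_numeral lessThan_Suc insert_commute)

lemma cl6_2: "k < 6 \<Longrightarrow> \<exists>R'\<in>S6. \<exists>t. bij_betw t {0..<6} {0..<6} \<and> mutate 6 k (lm 6 L6_2) = relab 6 t R'"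
proof -
  assume "k < 6"
  then have "k = 0 | k = 1 | k = 2 | k = 3 | k = 4 | k = 5" by linarith
  then show ?thesis
  proof (elim disjE)
    assume k: "k = 0" show ?thesis unfolding k S6_def using b6_2_0 c6_2_0 by blast
  next
    assume k: "k = 1" show ?thesis unfolding k S6_def using b6_2_1 c6_2_1 by blast
  next
    assume k: "k = 2" show ?thesis unfolding k S6_def using b6_2_2 c6_2_2 by blast
  next
    assume k: "k = 3" show ?thesis unfolding k S6_def using b6_2_3 c6_2_3 by blast
  next
    assume k: "k = 4" show ?thesis unfolding k S6_def using b6_2_4 c6_2_4 by blast
  next
    assume k: "k = 5" show ?thesis unfolding k S6_def using b6_2_5 c6_2_5 by blast
  qed
qed

lemma c6_3_0: "mutate 6 0 (lm 6 L6_3) = relab 6 ((!) [5::nat,3,0,2,1,4]) (lm 6 L6_4)"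
  by (rule eq_by_tab[OF zo_mutate zo_relab]) (simp add: L6_3_def L6_4_def; code_simp)

lemma b6_3_0: "bij_betw ((!) [5::nat,3,0,2,1,4]) {0..<6} {0..<6}"
  by (rule bij_list) (simp_all add: atLeast0LessThan lessThan_nat_numeral lessThan_Suc insert_commute)

lemma c6_3_1: "mutate 6 1 (lm 6 L6_3) = relab 6 ((!) [0::nat,1,2,3,4,5]) (lm 6 L6_1)"
  by (rule eq_by_tab[OF zo_mutate zo_relab]) (simp add: L6_3_def L6_1_def; code_simp)

lemma b6_3_1: "bij_betw ((!) [0::nat,1,2,3,4,5]) {0..<6} {0..<6}"
  by (rule bij_list) (simp_all add: atLeast0LessThan lessThan_nat_numeral lessThan_Suc insert_commute)

lemma c6_3_2: "mutate 6 2 (lm 6 L6_3) = relab 6 ((!) [0::nat,4,5,2,1,3]) (lm 6 L6_4)"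
  by (rule eq_by_tab[OF zo_mutate zo_relab]) (simp add: L6_3_def L6_4_def; code_simp)

lemma b6_3_2: "bij_betw ((!) [0::nat,4,5,2,1,3]) {0..<6} {0..<6}"
  by (rule bij_list) (simp_all add: atLeast0LessThan lessThan_nat_numeral lessThan_Suc insert_commute)

lemma c6_3_3: "mutate 6 3 (lm 6 L6_3) = relab 6 ((!) [2::nat,5,4,1,0,3]) (lm 6 L6_1)"
  by (rule eq_by_tab[OF zo_mutate zo_relab]) (simp add: L6_3_def L6_1_def; code_simp)

lemma b6_3_3: "bij_betw ((!) [2::nat,5,4,1,0,3]) {0..<6} {0..<6}"
  by (rule bij_list) (simp_all add: atLeast0LessThan lessThan_nat_numeral lessThan_Suc insert_commute)

lemma c6_3_4: "mutate 6 4 (lm 6 L6_3) = relab 6 ((!) [0::nat,4,1,3,5,2]) (lm 6 L6_4)"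
  by (rule eq_by_tab[OF zo_mutate zo_relab]) (simp add: L6_3_def L6_4_def; code_simp)

lemma b6_3_4: "bij_betw ((!) [0::nat,4,1,3,5,2]) {0..<6} {0..<6}"
  by (rule bij_list) (simp_all add: atLeast0LessThan lessThan_nat_numeral lessThan_Suc insert_commute)

lemma c6_3_5: "mutate 6 5 (lm 6 L6_3) = relab 6 ((!) [2::nat,5,0,3,4,1]) (lm 6 L6_1)"
  by (rule eq_by_tab[OF zo_mutate zo_relab]) (simp add: L6_3_def L6_1_def; code_simp)

lemma b6_3_5: "bij_betw ((!) [2::nat,5,0,3,4,1]) {0..<6} {0..<6}"
  by (rule bij_list) (simp_all add: atLeast0LessThan lessThan_nat_numeral lessThan_Suc insert_commute)

lemma cl6_3: "k < 6 \<Longrightarrow> \<exists>R'\<in>S6. \<exists>t. bij_betw t {0..<6} {0..<6} \<and> mutate 6 k (lm 6 L6_3) = relab 6 t R'"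
proof -
  assume "k < 6"
  then have "k = 0 | k = 1 | k = 2 | k = 3 | k = 4 | k = 5" by linarith
  then show ?thesis
  proof (elim disjE)
    assume k: "k = 0" show ?thesis unfolding k S6_def using b6_3_0 c6_3_0 by blast
  next
    assume k: "k = 1" show ?thesis unfolding k S6_def using b6_3_1 c6_3_1 by blast
  next
    assume k: "k = 2" show ?thesis unfolding k S6_def using b6_3_2 c6_3_2 by blast
  next
    assume k: "k = 3" show ?thesis unfolding k S6_def using b6_3_3 c6_3_3 by blast
  next
    assume k: "k = 4" show ?thesis unfolding k S6_def using b6_3_4 c6_3_4 by blast
  next
    assume k: "k = 5" show ?thesis unfolding k S6_def using b6_3_5 c6_3_5 by blast
  qed
qed

lemma c6_4_0: "mutate 6 0 (lm 6 L6_4) = relab 6 ((!) [3::nat,1,0,2,4,5]) (lm 6 L6_1)"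
  by (rule eq_by_tab[OF zo_mutate zo_relab]) (simp add: L6_4_def L6_1_def; code_simp)

lemma b6_4_0: "bij_betw ((!) [3::nat,1,0,2,4,5]) {0..<6} {0..<6}"
  by (rule bij_list) (simp_all add: atLeast0LessThan lessThan_nat_numeral lessThan_Suc insert_commute)

lemma c6_4_1: "mutate 6 1 (lm 6 L6_4) = relab 6 ((!) [1::nat,3,4,2,0,5]) (lm 6 L6_1)"
  by (rule eq_by_tab[OF zo_mutate zo_relab]) (simp add: L6_4_def L6_1_def; code_simp)

lemma b6_4_1: "bij_betw ((!) [1::nat,3,4,2,0,5]) {0..<6} {0..<6}"
  by (rule bij_list) (simp_all add: atLeast0LessThan lessThan_nat_numeral lessThan_Suc insert_commute)

lemma c6_4_2: "mutate 6 2 (lm 6 L6_4) = relab 6 ((!) [0::nat,1,2,3,4,5]) (lm 6 L6_1)"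
  by (rule eq_by_tab[OF zo_mutate zo_relab]) (simp add: L6_4_def L6_1_def; code_simp)

lemma b6_4_2: "bij_betw ((!) [0::nat,1,2,3,4,5]) {0..<6} {0..<6}"
  by (rule bij_list) (simp_all add: atLeast0LessThan lessThan_nat_numeral lessThan_Suc insert_commute)

lemma c6_4_3: "mutate 6 3 (lm 6 L6_4) = relab 6 ((!) [2::nat,4,3,0,5,1]) (lm 6 L6_2)"
  by (rule eq_by_tab[OF zo_mutate zo_relab]) (simp add: L6_4_def L6_2_def; code_simp)

lemma b6_4_3: "bij_betw ((!) [2::nat,4,3,0,5,1]) {0..<6} {0..<6}"
  by (rule bij_list) (simp_all add: atLeast0LessThan lessThan_nat_numeral lessThan_Suc insert_commute)

lemma c6_4_4: "mutate 6 4 (lm 6 L6_4) = relab 6 ((!) [1::nat,0,2,5,4,3]) (lm 6 L6_1)"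
  by (rule eq_by_tab[OF zo_mutate zo_relab]) (simp add: L6_4_def L6_1_def; code_simp)

lemma b6_4_4: "bij_betw ((!) [1::nat,0,2,5,4,3]) {0..<6} {0..<6}"
  by (rule bij_list) (simp_all add: atLeast0LessThan lessThan_nat_numeral lessThan_Suc insert_commute)

lemma c6_4_5: "mutate 6 5 (lm 6 L6_4) = relab 6 ((!) [0::nat,2,5,3,1,4]) (lm 6 L6_3)"
  by (rule eq_by_tab[OF zo_mutate zo_relab]) (simp add: L6_4_def L6_3_def; code_simp)

lemma b6_4_5: "bij_betw ((!) [0::nat,2,5,3,1,4]) {0..<6} {0..<6}"
  by (rule bij_list) (simp_all add: atLeast0LessThan lessThan_nat_numeral lessThan_Suc insert_commute)

lemma cl6_4: "k < 6 \<Longrightarrow> \<exists>R'\<in>S6. \<exists>t. bij_betw t {0..<6} {0..<6} \<and> mutate 6 k (lm 6 L6_4) = relab 6 t R'"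
proof -
  assume "k < 6"
  then have "k = 0 | k = 1 | k = 2 | k = 3 | k = 4 | k = 5" by linarith
  then show ?thesis
  proof (elim disjE)
    assume k: "k = 0" show ?thesis unfolding k S6_def using b6_4_0 c6_4_0 by blast
  next
    assume k: "k = 1" show ?thesis unfolding k S6_def using b6_4_1 c6_4_1 by blast
  next
    assume k: "k = 2" show ?thesis unfolding k S6_def using b6_4_2 c6_4_2 by blast
  next
    assume k: "k = 3" show ?thesis unfolding k S6_def using b6_4_3 c6_4_3 by blast
  next
    assume k: "k = 4" show ?thesis unfolding k S6_def using b6_4_4 c6_4_4 by blast
  next
    assume k: "k = 5" show ?thesis unfolding k S6_def using b6_4_5 c6_4_5 by blast
  qed
qed

lemma closed6: "closed 6 S6"
  unfolding closed_def S6_def using cl6_0 cl6_1 cl6_2 cl6_3 cl6_4 unfolding S6_def by blast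

lemma fin6: "mutation_finite 6 X6"
  by (rule finite_class[OF closed6]) (auto simp: S6_def Inv_def X6_lm intro!: bexI[of _ "lm 6 L6_0"] exI[of _ id] simp add: relab_def lm_def fun_eq_iff)

definition L7_0 :: "int list list" where "L7_0 = [[(0::int),(- 1),(1::int),(- 1),(1::int),(- 1),(1::int)],[(1::int),(0::int),(- 2),(0::int),(0::int),(0::int),(0::int)],[(- 1),(2::int),(0::int),(0::int),(0::int),(0::int),(0::int)],[(1::int),(0::int),(0::int),(0::int),(- 2),(0::int),(0::int)],[(- 1),(0::int),(0::int),(2::int),(0::int),(0::int),(0::int)],[(1::int),(0::int),(0::int),(0::int),(0::int),(0::int),(- 2)],[(- 1),(0::int),(0::int),(0::int),(0::int),(2::int),(0::int)]]"

definition L7_1 :: "int list list" where "L7_1 = [[(0::int),(1::int),(- 1),(1::int),(- 1),(1::int),(- 1)],[(- 1),(0::int),(- 1),(0::int),(1::int),(0::int),(1::int)],[(1::int),(1::int),(0::int),(- 1),(0::int),(- 1),(0::int)],[(- 1),(0::int),(1::int),(0::int),(- 1),(0::int),(1::int)],[(1::int),(- 1),(0::int),(1::int),(0::int),(- 1),(0::int)],[(- 1),(0::int),(1::int),(0::int),(1::int),(0::int),(- 1)],[(1::int),(- 1),(0::int),(- 1),(0::int),(1::int),(0::int)]]"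

definition S7 :: "qmat set" where "S7 = {lm 7 L7_0, lm 7 L7_1}"

lemma X7_lm: "X7 = lm 7 L7_0"
  by (rule eq_by_tab[OF zo_moa[of 7 X7_arrows, folded X7_def] zo_lm]) (simp add: X7_def X7_arrows_def; code_simp)

lemma c7_0_0: "mutate 7 0 (lm 7 L7_0) = relab 7 ((!) [0::nat,1,2,3,4,5,6]) (lm 7 L7_1)"
  by (rule eq_by_tab[OF zo_mutate zo_relab]) (simp add: L7_0_def L7_1_def; code_simp)

lemma b7_0_0: "bij_betw ((!) [0::nat,1,2,3,4,5,6]) {0..<7} {0..<7}"
  by (rule bij_list) (simp_all add: atLeast0LessThan lessThan_nat_numeral lessThan_Suc insert_commute)

lemma c7_0_1: "mutate 7 1 (lm 7 L7_0) = relab 7 ((!) [0::nat,2,1,3,4,5,6]) (lm 7 L7_0)"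
  by (rule eq_by_tab[OF zo_mutate zo_relab]) (simp add: L7_0_def L7_0_def; code_simp)

lemma b7_0_1: "bij_betw ((!) [0::nat,2,1,3,4,5,6]) {0..<7} {0..<7}"
  by (rule bij_list) (simp_all add: atLeast0LessThan lessThan_nat_numeral lessThan_Suc insert_commute)

lemma c7_0_2: "mutate 7 2 (lm 7 L7_0) = relab 7 ((!) [0::nat,2,1,3,4,5,6]) (lm 7 L7_0)"
  by (rule eq_by_tab[OF zo_mutate zo_relab]) (simp add: L7_0_def L7_0_def; code_simp)

lemma b7_0_2: "bij_betw ((!) [0::nat,2,1,3,4,5,6]) {0..<7} {0..<7}"
  by (rule bij_list) (simp_all add: atLeast0LessThan lessThan_nat_numeral lessThan_Suc insert_commute)

lemma c7_0_3: "mutate 7 3 (lm 7 L7_0) = relab 7 ((!) [0::nat,1,2,4,3,5,6]) (lm 7 L7_0)"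
  by (rule eq_by_tab[OF zo_mutate zo_relab]) (simp add: L7_0_def L7_0_def; code_simp)

lemma b7_0_3: "bij_betw ((!) [0::nat,1,2,4,3,5,6]) {0..<7} {0..<7}"
  by (rule bij_list) (simp_all add: atLeast0LessThan lessThan_nat_numeral lessThan_Suc insert_commute)

lemma c7_0_4: "mutate 7 4 (lm 7 L7_0) = relab 7 ((!) [0::nat,1,2,4,3,5,6]) (lm 7 L7_0)"
  by (rule eq_by_tab[OF zo_mutate zo_relab]) (simp add: L7_0_def L7_0_def; code_simp)

lemma b7_0_4: "bij_betw ((!) [0::nat,1,2,4,3,5,6]) {0..<7} {0..<7}"
  by (rule bij_list) (simp_all add: atLeast0LessThan lessThan_nat_numeral lessThan_Suc insert_commute)

lemma c7_0_5: "mutate 7 5 (lm 7 L7_0) = relab 7 ((!) [0::nat,1,2,3,4,6,5]) (lm 7 L7_0)"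
  by (rule eq_by_tab[OF zo_mutate zo_relab]) (simp add: L7_0_def L7_0_def; code_simp)

lemma b7_0_5: "bij_betw ((!) [0::nat,1,2,3,4,6,5]) {0..<7} {0..<7}"
  by (rule bij_list) (simp_all add: atLeast0LessThan lessThan_nat_numeral lessThan_Suc insert_commute)

lemma c7_0_6: "mutate 7 6 (lm 7 L7_0) = relab 7 ((!) [0::nat,1,2,3,4,6,5]) (lm 7 L7_0)"
  by (rule eq_by_tab[OF zo_mutate zo_relab]) (simp add: L7_0_def L7_0_def; code_simp)

lemma b7_0_6: "bij_betw ((!) [0::nat,1,2,3,4,6,5]) {0..<7} {0..<7}"
  by (rule bij_list) (simp_all add: atLeast0LessThan lessThan_nat_numeral lessThan_Suc insert_commute)

lemma cl7_0: "k < 7 \<Longrightarrow> \<exists>R'\<in>S7. \<exists>t. bij_betw t {0..<7} {0..<7} \<and> mutate 7 k (lm 7 L7_0) = relab 7 t R'"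
proof -
  assume "k < 7"
  then have "k = 0 | k = 1 | k = 2 | k = 3 | k = 4 | k = 5 | k = 6" by linarith
  then show ?thesis
  proof (elim disjE)
    assume k: "k = 0" show ?thesis unfolding k S7_def using b7_0_0 c7_0_0 by blast
  next
    assume k: "k = 1" show ?thesis unfolding k S7_def using b7_0_1 c7_0_1 by blast
  next
    assume k: "k = 2" show ?thesis unfolding k S7_def using b7_0_2 c7_0_2 by blast
  next
    assume k: "k = 3" show ?thesis unfolding k S7_def using b7_0_3 c7_0_3 by blast
  next
    assume k: "k = 4" show ?thesis unfolding k S7_def using b7_0_4 c7_0_4 by blast
  next
    assume k: "k = 5" show ?thesis unfolding k S7_def using b7_0_5 c7_0_5 by blast
  next
    assume k: "k = 6" show ?thesis unfolding k S7_def using b7_0_6 c7_0_6 by blast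
  qed
qed

lemma c7_1_0: "mutate 7 0 (lm 7 L7_1) = relab 7 ((!) [0::nat,1,2,3,4,5,6]) (lm 7 L7_0)"
  by (rule eq_by_tab[OF zo_mutate zo_relab]) (simp add: L7_1_def L7_0_def; code_simp)

lemma b7_1_0: "bij_betw ((!) [0::nat,1,2,3,4,5,6]) {0..<7} {0..<7}"
  by (rule bij_list) (simp_all add: atLeast0LessThan lessThan_nat_numeral lessThan_Suc insert_commute)

lemma c7_1_1: "mutate 7 1 (lm 7 L7_1) = relab 7 ((!) [1::nat,2,0,4,5,6,3]) (lm 7 L7_1)"
  by (rule eq_by_tab[OF zo_mutate zo_relab]) (simp add: L7_1_def L7_1_def; code_simp)

lemma b7_1_1: "bij_betw ((!) [1::nat,2,0,4,5,6,3]) {0..<7} {0..<7}"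
  by (rule bij_list) (simp_all add: atLeast0LessThan lessThan_nat_numeral lessThan_Suc insert_commute)

lemma c7_1_2: "mutate 7 2 (lm 7 L7_1) = relab 7 ((!) [2::nat,0,1,4,5,6,3]) (lm 7 L7_1)"
  by (rule eq_by_tab[OF zo_mutate zo_relab]) (simp add: L7_1_def L7_1_def; code_simp)

lemma b7_1_2: "bij_betw ((!) [2::nat,0,1,4,5,6,3]) {0..<7} {0..<7}"
  by (rule bij_list) (simp_all add: atLeast0LessThan lessThan_nat_numeral lessThan_Suc insert_commute)

lemma c7_1_3: "mutate 7 3 (lm 7 L7_1) = relab 7 ((!) [1::nat,4,5,2,0,6,3]) (lm 7 L7_1)"
  by (rule eq_by_tab[OF zo_mutate zo_relab]) (simp add: L7_1_def L7_1_def; code_simp)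

lemma b7_1_3: "bij_betw ((!) [1::nat,4,5,2,0,6,3]) {0..<7} {0..<7}"
  by (rule bij_list) (simp_all add: atLeast0LessThan lessThan_nat_numeral lessThan_Suc insert_commute)

lemma c7_1_4: "mutate 7 4 (lm 7 L7_1) = relab 7 ((!) [2::nat,4,5,0,1,6,3]) (lm 7 L7_1)"
  by (rule eq_by_tab[OF zo_mutate zo_relab]) (simp add: L7_1_def L7_1_def; code_simp)

lemma b7_1_4: "bij_betw ((!) [2::nat,4,5,0,1,6,3]) {0..<7} {0..<7}"
  by (rule bij_list) (simp_all add: atLeast0LessThan lessThan_nat_numeral lessThan_Suc insert_commute)

lemma c7_1_5: "mutate 7 5 (lm 7 L7_1) = relab 7 ((!) [1::nat,4,5,6,3,2,0]) (lm 7 L7_1)"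
  by (rule eq_by_tab[OF zo_mutate zo_relab]) (simp add: L7_1_def L7_1_def; code_simp)

lemma b7_1_5: "bij_betw ((!) [1::nat,4,5,6,3,2,0]) {0..<7} {0..<7}"
  by (rule bij_list) (simp_all add: atLeast0LessThan lessThan_nat_numeral lessThan_Suc insert_commute)

lemma c7_1_6: "mutate 7 6 (lm 7 L7_1) = relab 7 ((!) [2::nat,4,5,6,3,0,1]) (lm 7 L7_1)"
  by (rule eq_by_tab[OF zo_mutate zo_relab]) (simp add: L7_1_def L7_1_def; code_simp)

lemma b7_1_6: "bij_betw ((!) [2::nat,4,5,6,3,0,1]) {0..<7} {0..<7}"
  by (rule bij_list) (simp_all add: atLeast0LessThan lessThan_nat_numeral lessThan_Suc insert_commute)

lemma cl7_1: "k < 7 \<Longrightarrow> \<exists>R'\<in>S7. \<exists>t. bij_betw t {0..<7} {0..<7} \<and> mutate 7 k (lm 7 L7_1) = relab 7 t R'"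
proof -
  assume "k < 7"
  then have "k = 0 | k = 1 | k = 2 | k = 3 | k = 4 | k = 5 | k = 6" by linarith
  then show ?thesis
  proof (elim disjE)
    assume k: "k = 0" show ?thesis unfolding k S7_def using b7_1_0 c7_1_0 by blast
  next
    assume k: "k = 1" show ?thesis unfolding k S7_def using b7_1_1 c7_1_1 by blast
  next
    assume k: "k = 2" show ?thesis unfolding k S7_def using b7_1_2 c7_1_2 by blast
  next
    assume k: "k = 3" show ?thesis unfolding k S7_def using b7_1_3 c7_1_3 by blast
  next
    assume k: "k = 4" show ?thesis unfolding k S7_def using b7_1_4 c7_1_4 by blast
  next
    assume k: "k = 5" show ?thesis unfolding k S7_def using b7_1_5 c7_1_5 by blast
  next
    assume k: "k = 6" show ?thesis unfolding k S7_def using b7_1_6 c7_1_6 by blast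
  qed
qed

lemma closed7: "closed 7 S7"
  unfolding closed_def S7_def using cl7_0 cl7_1 unfolding S7_def by blast

lemma fin7: "mutation_finite 7 X7"
  by (rule finite_class[OF closed7]) (auto simp: S7_def Inv_def X7_lm intro!: bexI[of _ "lm 7 L7_0"] exI[of _ id] simp add: relab_def lm_def fun_eq_iff)

theorem mainTheorem1:
  shows "mutation_finite 6 X6 \<and> mutation_finite 7 X7"
  using fin6 fin7 by blast

end
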